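(* Let $\mathbb{V}$ and $\mathbb{V}'$ be varieties with the same signature $\mathcal{F}$ and defining sets of identities $\Sigma\subseteq\Sigma'$ respectively, and suppose $\mathbb{V}$ is BIT speciale. Then any set of ideal terms determining ideals in $\mathbb{V}$ determines ideals in $\mathbb{V}'$ too.
   Context: BIT speciale: the algebraic theory of $\mathbb{V}$ contains a constant $0$ and, for some $n\ge1$, binary terms $\alpha_1,\dots,\alpha_n$ and an $(n+1)$-ary term $\theta$ such that $\alpha_i(x,x)=0$ and $\theta(\alpha_1(x,y),\dots,\alpha_n(x,y),y)=x$ are identities of $\mathbb{V}$. For a variety $\mathbb{W}$ with signature $\mathcal{F}$: an ideal term of $\mathbb{W}$ in the variables $y_1,\dots,y_p$ is a term $t(x_1,\dots,x_m,y_1,\dots,y_p)$ with $t(x_1,\dots,x_m,0,\dots,0)=0$ an identity of $\mathbb{W}$; a non-empty subset $H$ of a $\mathbb{W}$-algebra $A$ is an ideal if $t(a_1,\dots,a_m,b_1,\dots,b_p)\in H$ for every ideal term $t$, all $a_r\in A$, $b_s\in H$. A set $T$ of ideal terms determines ideals in $\mathbb{W}$ if for every $\mathbb{W}$-algebra $A$, a non-empty $H\subseteq A$ is an ideal iff every $t\in T$ takes values in $H$ whenever its $x$-variables are assigned elements of $A$ and its $y$-variables elements of $H$. *)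

theory Defs
  imports Main
begin

datatype ('f, 'v) trm = Var 'v | Fn 'f "('f, 'v) trm list"

fun wf_trm :: "('f \<Rightarrow> nat) \<Rightarrow> ('f, 'v) trm \<Rightarrow> bool" where
  "wf_trm ar (Var v) = True"
| "wf_trm ar (Fn f ts) = (length ts = ar f \<and> (\<forall>t\<in>set ts. wf_trm ar t))"

fun vars_trm :: "('f, 'v) trm \<Rightarrow> 'v set" where
  "vars_trm (Var v) = {v}"
| "vars_trm (Fn f ts) = (\<Union>t\<in>set ts. vars_trm t)"

fun subst :: "('v \<Rightarrow> ('f, 'w) trm) \<Rightarrow> ('f, 'v) trm \<Rightarrow> ('f, 'w) trm" where
  "subst \<sigma> (Var v) = \<sigma> v"
| "subst \<sigma> (Fn f ts) = Fn f (map (subst \<sigma>) ts)"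

fun eval :: "('f \<Rightarrow> 'a list \<Rightarrow> 'a) \<Rightarrow> ('v \<Rightarrow> 'a) \<Rightarrow> ('f, 'v) trm \<Rightarrow> 'a" where
  "eval I \<rho> (Var v) = \<rho> v"
| "eval I \<rho> (Fn f ts) = I f (map (eval I \<rho>) ts)"

type_synonym 'f identity = "('f, nat) trm \<times> ('f, nat) trm"

definition identities :: "('f \<Rightarrow> nat) \<Rightarrow> 'f identity set \<Rightarrow> bool" where
  "identities ar \<Sigma> \<longleftrightarrow> (\<forall>(s, t)\<in>\<Sigma>. wf_trm ar s \<and> wf_trm ar t)"

text \<open>Equational consequence (Birkhoff's equational logic): the identities of the
  variety defined by \<Sigma>.\<close>
inductive deriv :: "('f \<Rightarrow> nat) \<Rightarrow> 'f identity set \<Rightarrow> ('f, nat) trm \<Rightarrow> ('f, nat) trm \<Rightarrow> bool"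
  for ar \<Sigma> where
  ax: "(s, t) \<in> \<Sigma> \<Longrightarrow> (\<forall>v. wf_trm ar (\<sigma> v)) \<Longrightarrow> deriv ar \<Sigma> (subst \<sigma> s) (subst \<sigma> t)"
| refl: "deriv ar \<Sigma> t t"
| sym: "deriv ar \<Sigma> s t \<Longrightarrow> deriv ar \<Sigma> t s"
| trans: "deriv ar \<Sigma> s u \<Longrightarrow> deriv ar \<Sigma> u t \<Longrightarrow> deriv ar \<Sigma> s t"
| cong: "list_all2 (deriv ar \<Sigma>) ss ts \<Longrightarrow> deriv ar \<Sigma> (Fn f ss) (Fn f ts)"

definition is_alg :: "('f \<Rightarrow> nat) \<Rightarrow> 'a set \<Rightarrow> ('f \<Rightarrow> 'a list \<Rightarrow> 'a) \<Rightarrow> bool" where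
  "is_alg ar A I \<longleftrightarrow> (\<forall>f as. set as \<subseteq> A \<and> length as = ar f \<longrightarrow> I f as \<in> A)"

definition var_alg :: "('f \<Rightarrow> nat) \<Rightarrow> 'f identity set \<Rightarrow> 'a set \<Rightarrow> ('f \<Rightarrow> 'a list \<Rightarrow> 'a) \<Rightarrow> bool" where
  "var_alg ar \<Sigma> A I \<longleftrightarrow> is_alg ar A I \<and>
     (\<forall>(s, t)\<in>\<Sigma>. \<forall>\<rho>. (\<forall>v. \<rho> v \<in> A) \<longrightarrow> eval I \<rho> s = eval I \<rho> t)"

text \<open>The constant 0 of the algebraic theory is a ground (variable-free) term z.\<close>
definition BIT_speciale :: "('f \<Rightarrow> nat) \<Rightarrow> 'f identity set \<Rightarrow> ('f, nat) trm \<Rightarrow> bool" where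
  "BIT_speciale ar \<Sigma> z \<longleftrightarrow> wf_trm ar z \<and> vars_trm z = {} \<and>
    (\<exists>n::nat. n \<ge> 1 \<and> (\<exists>(\<alpha> :: nat \<Rightarrow> ('f, nat) trm) (\<theta> :: ('f, nat) trm).
       (\<forall>i<n. wf_trm ar (\<alpha> i) \<and> vars_trm (\<alpha> i) \<subseteq> {0, 1}) \<and>
       wf_trm ar \<theta> \<and> vars_trm \<theta> \<subseteq> {..n} \<and>
       (\<forall>i<n. deriv ar \<Sigma> (subst (\<lambda>_. Var 0) (\<alpha> i)) z) \<and>
       deriv ar \<Sigma> (subst (\<lambda>j. if j < n then \<alpha> j else Var 1) \<theta>) (Var 0)))"

text \<open>An ideal term is a pair (t, Y): t is a term, Y the set of its y-variables
  (all other variables are x-variables); t(x, 0, ..., 0) = 0 must be an identity.\<close>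
definition ideal_term :: "('f \<Rightarrow> nat) \<Rightarrow> 'f identity set \<Rightarrow> ('f, nat) trm \<Rightarrow>
    ('f, nat) trm \<times> nat set \<Rightarrow> bool" where
  "ideal_term ar \<Sigma> z p \<longleftrightarrow> (case p of (t, Y) \<Rightarrow>
     wf_trm ar t \<and> deriv ar \<Sigma> (subst (\<lambda>v. if v \<in> Y then z else Var v) t) z)"

definition closed_under :: "'a set \<Rightarrow> ('f \<Rightarrow> 'a list \<Rightarrow> 'a) \<Rightarrow> 'a set \<Rightarrow>
    ('f, nat) trm \<times> nat set \<Rightarrow> bool" where
  "closed_under A I H p \<longleftrightarrow> (case p of (t, Y) \<Rightarrow>
     (\<forall>\<rho>. (\<forall>v. \<rho> v \<in> A) \<longrightarrow> (\<forall>v\<in>Y. \<rho> v \<in> H) \<longrightarrow> eval I \<rho> t \<in> H))"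

definition is_ideal :: "('f \<Rightarrow> nat) \<Rightarrow> 'f identity set \<Rightarrow> ('f, nat) trm \<Rightarrow>
    'a set \<Rightarrow> ('f \<Rightarrow> 'a list \<Rightarrow> 'a) \<Rightarrow> 'a set \<Rightarrow> bool" where
  "is_ideal ar \<Sigma> z A I H \<longleftrightarrow> H \<noteq> {} \<and> H \<subseteq> A \<and>
     (\<forall>p. ideal_term ar \<Sigma> z p \<longrightarrow> closed_under A I H p)"

text \<open>T determines ideals in the variety defined by \<Sigma> (for all its algebras with
  carrier in type 'a).\<close>
definition determines_ideals :: "('f \<Rightarrow> nat) \<Rightarrow> 'f identity set \<Rightarrow> ('f, nat) trm \<Rightarrow>
    (('f, nat) trm \<times> nat set) set \<Rightarrow> 'a itself \<Rightarrow> bool" where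
  "determines_ideals ar \<Sigma> z T (_ :: 'a itself) \<longleftrightarrow>
     (\<forall>p\<in>T. ideal_term ar \<Sigma> z p) \<and>
     (\<forall>(A :: 'a set) I. var_alg ar \<Sigma> A I \<longrightarrow>
        (\<forall>H. H \<noteq> {} \<and> H \<subseteq> A \<longrightarrow>
           (is_ideal ar \<Sigma> z A I H \<longleftrightarrow> (\<forall>p\<in>T. closed_under A I H p))))"

end

theory Submission
  imports Defs
begin

lemma eval_subst: "eval I \<rho> (subst \<sigma> t) = eval I (\<lambda>v. eval I \<rho> (\<sigma> v)) t"
  by (induct t) (auto cong: map_cong)

lemma subst_subst: "subst \<tau> (subst \<sigma> t) = subst (\<lambda>v. subst \<tau> (\<sigma> v)) t"
  by (induct t) (auto cong: map_cong)

lemma subst_cong_vars: "(\<forall>v\<in>vars_trm t. \<sigma> v = \<tau> v) \<Longrightarrow> subst \<sigma> t = subst \<tau> t"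
  by (induct t) (auto cong: map_cong)

lemma eval_cong_vars: "(\<forall>v\<in>vars_trm t. \<rho> v = \<rho>' v) \<Longrightarrow> eval I \<rho> t = eval I \<rho>' t"
  by (induct t) (auto cong: map_cong)

lemma subst_Var: "subst Var t = t"
  by (induct t) (auto simp: map_idI)

lemma subst_ground: "vars_trm z = {} \<Longrightarrow> subst \<sigma> z = z"
  using subst_cong_vars[of z \<sigma> Var] subst_Var[of z] by simp

lemma eval_ground: "vars_trm z = {} \<Longrightarrow> eval I \<rho> z = eval I \<rho>' z"
  using eval_cong_vars[of z \<rho> \<rho>'] by simp

lemma wf_subst: "wf_trm ar t \<Longrightarrow> (\<forall>v. wf_trm ar (\<sigma> v)) \<Longrightarrow> wf_trm ar (subst \<sigma> t)"
  by (induct t) auto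

lemma eval_in: "is_alg ar A I \<Longrightarrow> wf_trm ar t \<Longrightarrow> (\<forall>v. \<rho> v \<in> A) \<Longrightarrow> eval I \<rho> t \<in> A"
proof (induct t)
  case (Var x)
  then show ?case by simp
next
  case (Fn f ts)
  then have "set (map (eval I \<rho>) ts) \<subseteq> A" by auto
  then show ?case using Fn unfolding is_alg_def by simp
qed

lemma deriv_mono: "deriv ar \<Sigma> s t \<Longrightarrow> \<Sigma> \<subseteq> \<Sigma>' \<Longrightarrow> deriv ar \<Sigma>' s t"
proof (induct rule: deriv.induct)
  case (ax s t \<sigma>)
  then show ?case by (auto intro: deriv.ax)
next
  case (refl t)
  show ?case by (rule deriv.refl)
next
  case (sym s t)
  then show ?case by (auto intro: deriv.sym)
next
  case (trans s u t)
  then show ?case by (auto intro: deriv.trans)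
next
  case (cong ss ts f)
  then show ?case by (auto intro!: deriv.cong elim: list_all2_mono)
qed

lemma deriv_sound: "deriv ar \<Sigma> s t \<Longrightarrow> var_alg ar \<Sigma> A I \<Longrightarrow> (\<forall>v. \<rho> v \<in> A) \<Longrightarrow>
  eval I \<rho> s = eval I \<rho> t"
proof (induct arbitrary: \<rho> rule: deriv.induct)
  case (ax s t \<sigma>)
  have "\<forall>v. eval I \<rho> (\<sigma> v) \<in> A"
    using ax eval_in unfolding var_alg_def by blast
  then show ?case using ax unfolding var_alg_def eval_subst by fastforce
next
  case (refl t)
  then show ?case by simp
next
  case (sym s t)
  then show ?case by simp
next
  case (trans s u t)
  then show ?case by simp
next
  case (cong ss ts f)
  then have "map (eval I \<rho>) ss = map (eval I \<rho>) ts"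
    by (induct ss ts rule: list_all2_induct) auto
  then show ?case by simp
qed

lemma deriv_subst: "deriv ar \<Sigma> s t \<Longrightarrow> (\<forall>v. wf_trm ar (\<tau> v)) \<Longrightarrow>
  deriv ar \<Sigma> (subst \<tau> s) (subst \<tau> t)"
proof (induct rule: deriv.induct)
  case (ax s t \<sigma>)
  have "deriv ar \<Sigma> (subst (\<lambda>v. subst \<tau> (\<sigma> v)) s) (subst (\<lambda>v. subst \<tau> (\<sigma> v)) t)"
    using ax by (intro deriv.ax) (auto intro: wf_subst)
  then show ?case by (simp add: subst_subst)
next
  case (refl t)
  show ?case by (rule deriv.refl)
next
  case (sym s t)
  then show ?case by (auto intro: deriv.sym)
next
  case (trans s u t)
  then show ?case by (auto intro: deriv.trans)
next
  case (cong ss ts f)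
  then have "list_all2 (deriv ar \<Sigma>) (map (subst \<tau>) ss) (map (subst \<tau>) ts)"
    by (induct ss ts rule: list_all2_induct) auto
  then show ?case by (auto intro: deriv.cong)
qed

lemma deriv_subst_cong: "(\<forall>v. deriv ar \<Sigma> (\<sigma> v) (\<tau> v)) \<Longrightarrow>
  deriv ar \<Sigma> (subst \<sigma> t) (subst \<tau> t)"
proof (induct t)
  case (Var x)
  then show ?case by simp
next
  case (Fn f ts)
  then have "list_all2 (deriv ar \<Sigma>) (map (subst \<sigma>) ts) (map (subst \<tau>) ts)"
    by (simp add: list_all2_map1 list_all2_map2 list.rel_refl_strong)
  then show ?case by (auto intro: deriv.cong)
qed


lemma ideal_term_mono: "ideal_term ar \<Sigma> z p \<Longrightarrow> \<Sigma> \<subseteq> \<Sigma>' \<Longrightarrow> ideal_term ar \<Sigma>' z p"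
  unfolding ideal_term_def by (auto split: prod.splits intro: deriv_mono)

lemma var_alg_mono: "var_alg ar \<Sigma>' A I \<Longrightarrow> \<Sigma> \<subseteq> \<Sigma>' \<Longrightarrow> var_alg ar \<Sigma> A I"
  unfolding var_alg_def by blast

lemma key:
  fixes ar :: "'f \<Rightarrow> nat"
  assumes sub: "\<Sigma> \<subseteq> \<Sigma>'" and bit: "BIT_speciale ar \<Sigma> z"
    and va: "var_alg ar \<Sigma>' A I" and HA: "H \<subseteq> A"
    and idl: "\<forall>p. ideal_term ar \<Sigma> z p \<longrightarrow> closed_under A I H p"
    and it: "ideal_term ar \<Sigma>' z (t, Y)"
  shows "closed_under A I H (t, Y)"
proof -
  have vaS: "var_alg ar \<Sigma> A I" using va sub by (rule var_alg_mono)
  have alg: "is_alg ar A I" using va unfolding var_alg_def by blast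
  have wfz: "wf_trm ar z" and gz: "vars_trm z = {}" using bit unfolding BIT_speciale_def by auto
  obtain n :: nat and \<alpha> and \<theta> :: "('f, nat) trm" where wa: "\<forall>i<n. wf_trm ar (\<alpha> i)" and wth: "wf_trm ar \<theta>"
    and da: "\<forall>i<n. deriv ar \<Sigma> (subst (\<lambda>_. Var 0) (\<alpha> i)) z"
    and dth: "deriv ar \<Sigma> (subst (\<lambda>j. if j < n then \<alpha> j else Var 1) \<theta>) (Var 0)"
  proof -
    from bit obtain n :: nat and \<alpha> and \<theta> :: "('f, nat) trm" where
      "(\<forall>i<n. wf_trm ar (\<alpha> i) \<and> vars_trm (\<alpha> i) \<subseteq> {0, 1}) \<and>
       wf_trm ar \<theta> \<and> vars_trm \<theta> \<subseteq> {..n} \<and>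
       (\<forall>i<n. deriv ar \<Sigma> (subst (\<lambda>_. Var 0) (\<alpha> i)) z) \<and>
       deriv ar \<Sigma> (subst (\<lambda>j. if j < n then \<alpha> j else Var 1) \<theta>) (Var 0)"
      unfolding BIT_speciale_def by blast
    then show thesis using that by blast
  qed
  have wft: "wf_trm ar t" and dt: "deriv ar \<Sigma>' (subst (\<lambda>v. if v \<in> Y then z else Var v) t) z"
    using it unfolding ideal_term_def by auto
  define Yz where "Yz = (\<lambda>v. if v \<in> Y then z else Var v)"
  define t' where "t' = subst Yz t"
  have wfYz: "\<forall>v. wf_trm ar (Yz v)" using wfz by (simp add: Yz_def)
  have wft': "wf_trm ar t'" unfolding t'_def using wft wfYz by (rule wf_subst)
  have t't': "subst Yz t' = t'"
    unfolding t'_def subst_subst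
    by (rule subst_cong_vars) (auto simp: Yz_def subst_ground[OF gz])
  show ?thesis unfolding closed_under_def
  proof (simp, intro allI impI)
    fix \<rho> assume \<rho>A: "\<forall>v. \<rho> v \<in> A" and \<rho>H: "\<forall>v\<in>Y. \<rho> v \<in> H"
    define u where "u = eval I \<rho> t"
    define c where "c = eval I \<rho> z"
    have uA: "u \<in> A" unfolding u_def using alg wft \<rho>A by (rule eval_in)
    have cA: "c \<in> A" unfolding c_def using alg wfz \<rho>A by (rule eval_in)
    have t'c: "eval I \<rho> t' = c"
      using deriv_sound[OF dt va \<rho>A] unfolding t'_def Yz_def c_def by simp
    define \<mu> where "\<mu> = (\<lambda>v::nat. if v = 0 then u else c)"
    have \<mu>A: "\<forall>v. \<mu> v \<in> A" using uA cA by (simp add: \<mu>_def)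
    define h where "h = (\<lambda>j. eval I \<mu> (\<alpha> j))"
    have hH: "h j \<in> H" if j: "j < n" for j
    proof -
      define s where "s = subst (\<lambda>v. if v = 0 then t else t') (\<alpha> j)"
      have wfs: "wf_trm ar s" unfolding s_def using wa j wft wft' by (auto intro!: wf_subst)
      have "subst Yz s = subst (\<lambda>v. t') (\<alpha> j)"
        unfolding s_def subst_subst by (rule subst_cong_vars) (auto simp: t'_def[symmetric] t't')
      also have "\<dots> = subst (\<lambda>_. t') (subst (\<lambda>_. Var (0::nat)) (\<alpha> j))"
        by (simp add: subst_subst)
      finally have e: "subst Yz s = subst (\<lambda>_. t') (subst (\<lambda>_. Var (0::nat)) (\<alpha> j))" .
      have "deriv ar \<Sigma> (subst (\<lambda>_. t') (subst (\<lambda>_. Var (0::nat)) (\<alpha> j))) (subst (\<lambda>_. t') z)"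
        using deriv_subst[of ar \<Sigma> "subst (\<lambda>_. Var (0::nat)) (\<alpha> j)" z "\<lambda>_. t'"] da j wft' by auto
      then have "deriv ar \<Sigma> (subst Yz s) z" using e subst_ground[OF gz] by simp
      then have "ideal_term ar \<Sigma> z (s, Y)" unfolding ideal_term_def Yz_def using wfs by simp
      then have "closed_under A I H (s, Y)" using idl by blast
      then have "eval I \<rho> s \<in> H" unfolding closed_under_def using \<rho>A \<rho>H by blast
      moreover have "eval I \<rho> s = h j"
        unfolding s_def h_def eval_subst
        by (rule eval_cong_vars) (auto simp: \<mu>_def u_def t'c)
      ultimately show ?thesis by simp
    qed
    define th where "th = subst (\<lambda>j. if j < n then Var j else z) \<theta>"
    have wfth: "wf_trm ar th" unfolding th_def using wth wfz by (auto intro!: wf_subst)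
    have "subst (\<lambda>v. if v \<in> {..<n} then z else Var v) th = subst (\<lambda>_. z) \<theta>"
      unfolding th_def subst_subst by (rule subst_cong_vars) (auto simp: subst_ground[OF gz])
    moreover have "deriv ar \<Sigma> (subst (\<lambda>_. z) \<theta>) z"
    proof -
      have d1: "deriv ar \<Sigma> (subst (\<lambda>_. z) (subst (\<lambda>j. if j < n then \<alpha> j else Var 1) \<theta>))
          (subst (\<lambda>_. z) (Var 0))"
        using deriv_subst[OF dth, of "\<lambda>_. z"] wfz by auto
      have d2: "deriv ar \<Sigma> (subst (\<lambda>j. subst (\<lambda>_. z) (if j < n then \<alpha> j else Var 1)) \<theta>)
          (subst (\<lambda>_. z) \<theta>)"
      proof (rule deriv_subst_cong, intro allI)
        fix j
        show "deriv ar \<Sigma> (subst (\<lambda>_. z) (if j < n then \<alpha> j else Var 1)) z"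
        proof (cases "j < n")
          case True
          have "deriv ar \<Sigma> (subst (\<lambda>_. z) (subst (\<lambda>_. Var (0::nat)) (\<alpha> j))) (subst (\<lambda>_. z) z)"
            using deriv_subst[of ar \<Sigma> "subst (\<lambda>_. Var (0::nat)) (\<alpha> j)" z "\<lambda>_. z"] da True wfz by auto
          then show ?thesis using True by (simp add: subst_subst subst_ground[OF gz])
        next
          case False
          then show ?thesis by (simp add: deriv.refl)
        qed
      qed
      have e0: "subst (\<lambda>_. z) (Var 0) = z" by simp
      show ?thesis by (rule deriv.trans[OF deriv.sym[OF d2]]) (use d1 in \<open>unfold subst_subst e0\<close>)
    qed
    ultimately have "ideal_term ar \<Sigma> z (th, {..<n})" unfolding ideal_term_def using wfth by simp
    then have cl: "closed_under A I H (th, {..<n})" using idl by blast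
    have cc: "\<And>r. eval I r z = c" unfolding c_def by (rule eval_ground[OF gz])
    define \<rho>' where "\<rho>' = (\<lambda>j. if j < n then h j else c)"
    have \<rho>'A: "\<forall>v. \<rho>' v \<in> A" using hH HA cA by (auto simp: \<rho>'_def)
    have \<rho>'H: "\<forall>v\<in>{..<n}. \<rho>' v \<in> H" using hH by (simp add: \<rho>'_def)
    have "eval I \<rho>' th \<in> H" using cl \<rho>'A \<rho>'H unfolding closed_under_def prod.case by blast
    moreover have "eval I \<rho>' th = eval I \<mu> (subst (\<lambda>j. if j < n then \<alpha> j else Var 1) \<theta>)"
      unfolding th_def eval_subst
      by (rule eval_cong_vars) (simp add: \<rho>'_def h_def \<mu>_def cc)
    moreover have "eval I \<mu> (subst (\<lambda>j. if j < n then \<alpha> j else Var 1) \<theta>) = u"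
      using deriv_sound[OF dth vaS \<mu>A] by (simp add: \<mu>_def)
    ultimately show "eval I \<rho> t \<in> H" by (simp add: u_def)
  qed
qed

theorem corollary2p10:
  fixes ar :: "'f \<Rightarrow> nat"
    and \<Sigma> \<Sigma>' :: "'f identity set"
    and z :: "('f, nat) trm"
    and T :: "(('f, nat) trm \<times> nat set) set"
  assumes "identities ar \<Sigma>" and "identities ar \<Sigma>'" and "\<Sigma> \<subseteq> \<Sigma>'"
    and "BIT_speciale ar \<Sigma> z"
    and "determines_ideals ar \<Sigma> z T TYPE('a)"
  shows "determines_ideals ar \<Sigma>' z T TYPE('a)"
proof -
  have T1: "\<forall>p\<in>T. ideal_term ar \<Sigma> z p"
    using assms(5) unfolding determines_ideals_def by (rule conjunct1)
  have T2: "is_ideal ar \<Sigma> z A I H \<longleftrightarrow> (\<forall>p\<in>T. closed_under A I H p)"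
    if "var_alg ar \<Sigma> A I" "H \<noteq> {}" "H \<subseteq> A" for A :: "'a set" and I H
  proof -
    have "\<forall>(A :: 'a set) I. var_alg ar \<Sigma> A I \<longrightarrow>
        (\<forall>H. H \<noteq> {} \<and> H \<subseteq> A \<longrightarrow>
           (is_ideal ar \<Sigma> z A I H \<longleftrightarrow> (\<forall>p\<in>T. closed_under A I H p)))"
      using assms(5) unfolding determines_ideals_def by (rule conjunct2)
    then show ?thesis using that by blast
  qed
  have eq: "is_ideal ar \<Sigma>' z A I H \<longleftrightarrow> is_ideal ar \<Sigma> z A I H"
    if va: "var_alg ar \<Sigma>' A I" and H: "H \<noteq> {}" "H \<subseteq> A" for A :: "'a set" and I H
  proof
    assume "is_ideal ar \<Sigma>' z A I H"
    then show "is_ideal ar \<Sigma> z A I H"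
      unfolding is_ideal_def using ideal_term_mono[OF _ assms(3)] by blast
  next
    assume a: "is_ideal ar \<Sigma> z A I H"
    have "closed_under A I H p" if "ideal_term ar \<Sigma>' z p" for p
    proof (cases p)
      case (Pair t Y)
      show ?thesis unfolding Pair
        by (rule key[OF assms(3) assms(4) va H(2)])
           (use a that Pair in \<open>auto simp: is_ideal_def\<close>)
    qed
    then show "is_ideal ar \<Sigma>' z A I H"
      unfolding is_ideal_def using H by blast
  qed
  have "\<forall>p\<in>T. ideal_term ar \<Sigma>' z p"
    using T1 ideal_term_mono[OF _ assms(3)] by blast
  moreover have "is_ideal ar \<Sigma>' z A I H = (\<forall>p\<in>T. closed_under A I H p)"
    if va: "var_alg ar \<Sigma>' A I" and H: "H \<noteq> {}" "H \<subseteq> A" for A :: "'a set" and I H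
    using eq[OF va H] T2[OF var_alg_mono[OF va assms(3)] H] by simp
  ultimately show ?thesis unfolding determines_ideals_def by blast
qed

end
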